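(* Let $Y$ be a real normed linear space such that every non-zero approximately smooth element of $L(\ell_1^n,Y)$ is smooth. Then either $Y$ is smooth, or $Y$ is not approximately smooth.
   Context: $\ell_1^n$ is $\mathbb{R}^n$ with the $\ell_1$ norm; $L(\ell_1^n,Y)$ is the space of bounded linear operators with the operator norm. For a normed space $Z$ and $z\neq\theta$, $J(z)=\{\phi\in S_{Z^*}:\phi(z)=\|z\|\}$; $z$ is smooth if $J(z)$ is a singleton and $\varepsilon$-smooth if $\sup_{\phi,\psi\in J(z)}\|\phi-\psi\|\le\varepsilon$; an element is approximately smooth if it is $\varepsilon$-smooth for some $\varepsilon\in[0,2)$. The space $Z$ is smooth if every $z\in S_Z$ is smooth, and approximately smooth if there is $\varepsilon\in[0,2)$ such that every $z\in S_Z$ is $\varepsilon$-smooth. *)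

theory Defs
  imports "HOL-Analysis.Analysis"
begin

text \<open>ell_1^n is R^n (coordinates indexed by a finite type 'n, n = CARD('n))
  equipped with the ell_1 norm.\<close>

typedef 'n ell1 = "UNIV :: ('n::finite \<Rightarrow> real) set"
  morphisms ell1_vec Ell1 by auto

setup_lifting type_definition_ell1

instantiation ell1 :: (finite) real_vector
begin
lift_definition zero_ell1 :: "'a ell1" is "\<lambda>_. 0" .
lift_definition plus_ell1 :: "'a ell1 \<Rightarrow> 'a ell1 \<Rightarrow> 'a ell1" is "\<lambda>x y i. x i + y i" .
lift_definition minus_ell1 :: "'a ell1 \<Rightarrow> 'a ell1 \<Rightarrow> 'a ell1" is "\<lambda>x y i. x i - y i" .
lift_definition uminus_ell1 :: "'a ell1 \<Rightarrow> 'a ell1" is "\<lambda>x i. - x i" .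
lift_definition scaleR_ell1 :: "real \<Rightarrow> 'a ell1 \<Rightarrow> 'a ell1" is "\<lambda>c x i. c * x i" .
instance
  by standard (transfer; auto simp: fun_eq_iff algebra_simps)+
end

instantiation ell1 :: (finite) real_normed_vector
begin
definition norm_ell1 :: "'a ell1 \<Rightarrow> real" where
  "norm_ell1 x = (\<Sum>i\<in>UNIV. \<bar>ell1_vec x i\<bar>)"
definition sgn_ell1 :: "'a ell1 \<Rightarrow> 'a ell1" where
  "sgn_ell1 x = inverse (norm x) *\<^sub>R x"
definition dist_ell1 :: "'a ell1 \<Rightarrow> 'a ell1 \<Rightarrow> real" where
  "dist_ell1 x y = norm (x - y)"
definition uniformity_ell1 :: "('a ell1 \<times> 'a ell1) filter" where
  "uniformity_ell1 = (INF e\<in>{0<..}. principal {(x, y). dist x y < e})"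
definition open_ell1 :: "'a ell1 set \<Rightarrow> bool" where
  "open_ell1 U = (\<forall>x\<in>U. \<forall>\<^sub>F (x', y) in uniformity. x' = x \<longrightarrow> y \<in> U)"
instance
proof
  fix x y :: "'a ell1" and a :: real
  show "norm x = 0 \<longleftrightarrow> x = 0"
    unfolding norm_ell1_def
    by transfer (simp add: sum_nonneg_eq_0_iff fun_eq_iff)
  show "norm (x + y) \<le> norm x + norm y"
    unfolding norm_ell1_def
    by transfer (simp add: sum.distrib[symmetric] sum_mono abs_triangle_ineq)
  show "norm (a *\<^sub>R x) = \<bar>a\<bar> * norm x"
    unfolding norm_ell1_def
    by transfer (simp add: abs_mult sum_distrib_left)
qed (auto simp: sgn_ell1_def dist_ell1_def uniformity_ell1_def open_ell1_def)
end

text \<open>The dual space Z^* is represented by the bounded linear functionals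
  blinfun to real with the operator norm.\<close>

definition Jset :: "'a::real_normed_vector \<Rightarrow> ('a \<Rightarrow>\<^sub>L real) set" where
  "Jset z = {\<phi>. norm \<phi> = 1 \<and> blinfun_apply \<phi> z = norm z}"

definition smooth_elem :: "'a::real_normed_vector \<Rightarrow> bool" where
  "smooth_elem z \<longleftrightarrow> z \<noteq> 0 \<and> (\<exists>\<phi>. Jset z = {\<phi>})"

definition eps_smooth :: "real \<Rightarrow> 'a::real_normed_vector \<Rightarrow> bool" where
  "eps_smooth \<epsilon> z \<longleftrightarrow> z \<noteq> 0 \<and> (\<forall>\<phi>\<in>Jset z. \<forall>\<psi>\<in>Jset z. norm (\<phi> - \<psi>) \<le> \<epsilon>)"

definition approx_smooth_elem :: "'a::real_normed_vector \<Rightarrow> bool" where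
  "approx_smooth_elem z \<longleftrightarrow> (\<exists>\<epsilon>. 0 \<le> \<epsilon> \<and> \<epsilon> < 2 \<and> eps_smooth \<epsilon> z)"

definition smooth_space :: "'a::real_normed_vector itself \<Rightarrow> bool" where
  "smooth_space _ \<longleftrightarrow> (\<forall>z::'a. norm z = 1 \<longrightarrow> smooth_elem z)"

definition approx_smooth_space :: "'a::real_normed_vector itself \<Rightarrow> bool" where
  "approx_smooth_space _ \<longleftrightarrow>
     (\<exists>\<epsilon>. 0 \<le> \<epsilon> \<and> \<epsilon> < 2 \<and> (\<forall>z::'a. norm z = 1 \<longrightarrow> eps_smooth \<epsilon> z))"

end

theory Submission imports Defs begin

definition bas :: "'n::finite \<Rightarrow> 'n ell1" where
  "bas i = Ell1 (\<lambda>j. if j = i then 1 else 0)"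

lemma vec_bas: "ell1_vec (bas i) k = (if k = i then 1 else 0)"
  by (simp add: bas_def Ell1_inverse)

lemma vec_add: "ell1_vec (x + y) k = ell1_vec x k + ell1_vec y k"
  by (simp add: plus_ell1.rep_eq)
lemma vec_scale: "ell1_vec (c *\<^sub>R x) k = c * ell1_vec x k"
  by (simp add: scaleR_ell1.rep_eq)
lemma vec_zero: "ell1_vec 0 k = 0"
  by (simp add: zero_ell1.rep_eq)

lemma vec_sum: "finite A \<Longrightarrow> ell1_vec (sum f A) k = (\<Sum>a\<in>A. ell1_vec (f a) k)"
  by (induction A rule: finite_induct) (auto simp: vec_add vec_zero)

lemma decomp: "x = (\<Sum>j\<in>UNIV. ell1_vec x j *\<^sub>R bas (j::'n::finite))"
proof -
  have "ell1_vec x k = ell1_vec (\<Sum>j\<in>UNIV. ell1_vec x j *\<^sub>R bas (j::'n::finite)) k" for k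
    by (simp add: vec_sum vec_scale vec_bas if_distrib cong: if_cong)
  then show ?thesis using ell1_vec_inject by (metis ext)
qed

lemma norm_bas: "norm (bas (i::'n::finite)) = 1"
  by (simp add: norm_ell1_def vec_bas if_distrib cong: if_cong)

lemma coord_le: "\<bar>ell1_vec x i\<bar> \<le> norm (x::'n::finite ell1)"
  unfolding norm_ell1_def by (rule member_le_sum) auto

lemma G: "norm (blinfun_apply A x) \<le> (\<Sum>j\<in>UNIV. \<bar>ell1_vec x j\<bar> * norm (blinfun_apply A (bas (j::'n::finite))))"
proof -
  have "blinfun_apply A x = (\<Sum>j\<in>UNIV. ell1_vec x j *\<^sub>R blinfun_apply A (bas j))"
    by (subst decomp) (simp add: blinfun.sum_right blinfun.scaleR_right)
  also have "norm \<dots> \<le> (\<Sum>j\<in>UNIV. norm (ell1_vec x j *\<^sub>R blinfun_apply A (bas j)))"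
    by (rule norm_sum)
  finally show ?thesis by simp
qed

lemma bl_R: "bounded_linear (\<lambda>x. ell1_vec (x::'n::finite ell1) i *\<^sub>R (z::'b::real_normed_vector))"
proof (rule bounded_linear_intro[where K="norm z"])
  fix x y :: "'n ell1" and r :: real
  show "ell1_vec (x + y) i *\<^sub>R z = ell1_vec x i *\<^sub>R z + ell1_vec y i *\<^sub>R z"
    by (simp add: vec_add scaleR_add_left)
  show "ell1_vec (r *\<^sub>R x) i *\<^sub>R z = r *\<^sub>R (ell1_vec x i *\<^sub>R z)" by (simp add: vec_scale)
  show "norm (ell1_vec x i *\<^sub>R z) \<le> norm x * norm z"
    using coord_le[of x i] by (simp add: mult_right_mono)
qed

definition R :: "'n::finite \<Rightarrow> 'b::real_normed_vector \<Rightarrow> ('n ell1 \<Rightarrow>\<^sub>L 'b)" where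
  "R i z = Blinfun (\<lambda>x. ell1_vec x i *\<^sub>R z)"

lemma R_apply: "blinfun_apply (R i z) x = ell1_vec x i *\<^sub>R z"
  unfolding R_def by (simp add: bounded_linear_Blinfun_apply[OF bl_R])

lemma norm_R: "norm (R i z) \<le> norm z"
proof (rule norm_blinfun_bound)
  fix x
  have "\<bar>ell1_vec x i\<bar> * norm z \<le> norm x * norm z"
    by (rule mult_right_mono[OF coord_le]) simp
  then show "norm (blinfun_apply (R i z) x) \<le> norm z * norm x"
    by (simp add: R_apply mult.commute)
qed simp

lemma bl_Ri: "bounded_linear (R (i::'n::finite) :: 'b::real_normed_vector \<Rightarrow> _)"
proof (rule bounded_linear_intro[where K=1])
  fix x y :: 'b and r :: real
  show "R i (x + y) = R i x + R i y" by (rule blinfun_eqI) (simp add: R_apply scaleR_add_right blinfun.add_left)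
  show "R i (r *\<^sub>R x) = r *\<^sub>R R i x" by (rule blinfun_eqI) (simp add: R_apply blinfun.scaleR_left)
  show "norm (R i x) \<le> norm x * 1" using norm_R by simp
qed

lemma bl_L: "bounded_linear (\<lambda>S::'n::finite ell1 \<Rightarrow>\<^sub>L 'b::real_normed_vector. blinfun_apply \<phi> (blinfun_apply S (bas i)))"
  by (rule bounded_linear_compose[OF blinfun.bounded_linear_right bounded_bilinear.bounded_linear_left[OF bounded_bilinear_blinfun_apply]])

definition L :: "'n::finite \<Rightarrow> ('b::real_normed_vector \<Rightarrow>\<^sub>L real) \<Rightarrow> (('n ell1 \<Rightarrow>\<^sub>L 'b) \<Rightarrow>\<^sub>L real)" where
  "L i \<phi> = Blinfun (\<lambda>S. blinfun_apply \<phi> (blinfun_apply S (bas i)))"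

lemma L_apply: "blinfun_apply (L i \<phi>) S = blinfun_apply \<phi> (blinfun_apply S (bas i))"
  unfolding L_def by (simp add: bounded_linear_Blinfun_apply[OF bl_L])

lemma Sb_le: "norm (blinfun_apply S (bas (i::'n::finite))) \<le> norm S"
  using norm_blinfun[of S "bas i"] by (simp add: norm_bas)

lemma bl_P: "bounded_linear (\<lambda>z. blinfun_apply \<Phi> (R (i::'n::finite) (z::'b::real_normed_vector)))"
  by (rule bounded_linear_compose[OF blinfun.bounded_linear_right bl_Ri])

definition P :: "'n::finite \<Rightarrow> (('n ell1 \<Rightarrow>\<^sub>L 'b) \<Rightarrow>\<^sub>L real) \<Rightarrow> ('b::real_normed_vector \<Rightarrow>\<^sub>L real)" where
  "P i \<Phi> = Blinfun (\<lambda>z. blinfun_apply \<Phi> (R i z))"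

lemma P_apply: "blinfun_apply (P i \<Phi>) z = blinfun_apply \<Phi> (R i z)"
  unfolding P_def by (simp add: bounded_linear_Blinfun_apply[OF bl_P])

lemma R_bas: "blinfun_apply (R i z) (bas i) = z"
  by (simp add: R_apply vec_bas)

lemma R_bas_ne: "j \<noteq> i \<Longrightarrow> blinfun_apply (R i z) (bas j) = 0"
  by (simp add: R_apply vec_bas)

lemma norm_T: "norm (R i z) = norm z"
  using norm_R[of i z] Sb_le[of "R i z" i] by (simp add: R_bas)

lemma vanish_le:
  fixes y :: "'b::real_normed_vector" and i :: "'n::finite"
  assumes y: "norm y = 1" and \<Phi>: "\<Phi> \<in> Jset (R i y)" and S: "blinfun_apply S (bas i) = 0"
  shows "blinfun_apply \<Phi> S \<le> 0"
proof -
  define M where "M = (\<Sum>j\<in>UNIV. norm (blinfun_apply S (bas (j::'n))))"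
  have M0: "0 \<le> M" unfolding M_def by (simp add: sum_nonneg)
  define t where "t = 1 / (M + 1)"
  have t0: "0 < t" using M0 by (simp add: t_def)
  have tM: "t * M \<le> 1" using M0 by (simp add: t_def field_simps)
  have col: "norm (blinfun_apply (R i y + t *\<^sub>R S) (bas j)) \<le> 1" for j
  proof (cases "j = i")
    case True then show ?thesis using S y by (simp add: blinfun.add_left R_bas blinfun.scaleR_left)
  next
    case False
    have "norm (blinfun_apply S (bas j)) \<le> M" unfolding M_def by (rule member_le_sum) auto
    then have "t * norm (blinfun_apply S (bas j)) \<le> t * M" using t0 by simp
    then have "t * norm (blinfun_apply S (bas j)) \<le> 1" using tM by linarith
    then show ?thesis using False t0 by (simp add: blinfun.add_left R_bas_ne blinfun.scaleR_left)
  qed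
  have nT: "norm (R i y + t *\<^sub>R S) \<le> 1"
  proof (rule norm_blinfun_bound)
    fix x
    have "norm (blinfun_apply (R i y + t *\<^sub>R S) x) \<le> (\<Sum>j\<in>UNIV. \<bar>ell1_vec x j\<bar> * norm (blinfun_apply (R i y + t *\<^sub>R S) (bas j)))"
      by (rule G)
    also have "\<dots> \<le> (\<Sum>j\<in>UNIV. \<bar>ell1_vec x j\<bar> * 1)"
      by (rule sum_mono) (rule mult_left_mono[OF col], simp)
    finally show "norm (blinfun_apply (R i y + t *\<^sub>R S) x) \<le> 1 * norm x"
      by (simp add: norm_ell1_def)
  qed simp
  have "blinfun_apply \<Phi> (R i y + t *\<^sub>R S) \<le> norm \<Phi> * norm (R i y + t *\<^sub>R S)"
    using norm_blinfun[of \<Phi> "R i y + t *\<^sub>R S"] by simp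
  also have "\<dots> \<le> 1" using \<Phi> nT by (simp add: Jset_def)
  finally have "blinfun_apply \<Phi> (R i y) + t * blinfun_apply \<Phi> S \<le> 1"
    by (simp add: blinfun.add_right blinfun.scaleR_right)
  moreover have "blinfun_apply \<Phi> (R i y) = 1" using \<Phi> y by (simp add: Jset_def norm_T)
  ultimately have "t * blinfun_apply \<Phi> S \<le> 0" by simp
  then show ?thesis using t0 by (simp add: mult_le_0_iff)
qed

lemma vanish:
  fixes y :: "'b::real_normed_vector" and i :: "'n::finite"
  assumes y: "norm y = 1" and \<Phi>: "\<Phi> \<in> Jset (R i y)"
  shows "blinfun_apply \<Phi> S = blinfun_apply \<Phi> (R i (blinfun_apply S (bas i)))"
proof -
  define D where "D = S - R i (blinfun_apply S (bas i))"
  have D: "blinfun_apply D (bas i) = 0" by (simp add: D_def blinfun.diff_left R_bas)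
  have "blinfun_apply (-D) (bas i) = 0" using D by (simp add: blinfun.minus_left)
  have "blinfun_apply \<Phi> D \<le> 0" by (rule vanish_le[OF y \<Phi> D])
  moreover have "blinfun_apply \<Phi> (-D) \<le> 0" by (rule vanish_le[OF y \<Phi>]) (simp add: D blinfun.minus_left)
  ultimately have "blinfun_apply \<Phi> D = 0" by (simp add: blinfun.minus_right)
  then show ?thesis by (simp add: D_def blinfun.diff_right)
qed

lemma P_J:
  fixes y :: "'b::real_normed_vector" and i :: "'n::finite"
  assumes y: "norm y = 1" and \<Phi>: "\<Phi> \<in> Jset (R i y)"
  shows "P i \<Phi> \<in> Jset y"
proof -
  have n1: "norm \<Phi> = 1" and v: "blinfun_apply \<Phi> (R i y) = 1" using \<Phi> y by (auto simp: Jset_def norm_T)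
  have le: "norm (P i \<Phi>) \<le> 1"
  proof (rule norm_blinfun_bound)
    fix z
    have "norm (blinfun_apply \<Phi> (R i z)) \<le> norm \<Phi> * norm (R i z)" by (rule norm_blinfun)
    then show "norm (blinfun_apply (P i \<Phi>) z) \<le> 1 * norm z" by (simp add: P_apply n1 norm_T)
  qed simp
  have py: "blinfun_apply (P i \<Phi>) y = 1" by (simp add: P_apply v)
  have "1 \<le> norm (P i \<Phi>)" using norm_blinfun[of "P i \<Phi>" y] py y by simp
  with le py y show ?thesis by (simp add: Jset_def)
qed

lemma L_J:
  fixes y :: "'b::real_normed_vector" and i :: "'n::finite"
  assumes y: "norm y = 1" and \<phi>: "\<phi> \<in> Jset y"
  shows "L i \<phi> \<in> Jset (R i y)"
proof -
  have n1: "norm \<phi> = 1" and v: "blinfun_apply \<phi> y = 1" using \<phi> y by (auto simp: Jset_def)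
  have le: "norm (L i \<phi>) \<le> 1"
  proof (rule norm_blinfun_bound)
    fix S :: "'n ell1 \<Rightarrow>\<^sub>L 'b"
    have "norm (blinfun_apply \<phi> (blinfun_apply S (bas i))) \<le> norm \<phi> * norm (blinfun_apply S (bas i))" by (rule norm_blinfun)
    then show "norm (blinfun_apply (L i \<phi>) S) \<le> 1 * norm S" using Sb_le[of S i] by (simp add: L_apply n1)
  qed simp
  have py: "blinfun_apply (L i \<phi>) (R i y) = 1" by (simp add: L_apply R_bas v)
  have "1 \<le> norm (L i \<phi>)" using norm_blinfun[of "L i \<phi>" "R i y"] py y by (simp add: norm_T)
  with le py y show ?thesis by (simp add: Jset_def norm_T)
qed

theorem theorem3p6:
  assumes "\<forall>T :: ('n::finite ell1) \<Rightarrow>\<^sub>L ('b::real_normed_vector).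
             T \<noteq> 0 \<and> approx_smooth_elem T \<longrightarrow> smooth_elem T"
  shows "smooth_space TYPE('b) \<or> \<not> approx_smooth_space TYPE('b)"
proof (rule disjCI)
  assume "\<not> \<not> approx_smooth_space TYPE('b)"
  then obtain \<epsilon> where e: "0 \<le> \<epsilon>" "\<epsilon> < 2" and es: "\<And>z::'b. norm z = 1 \<Longrightarrow> eps_smooth \<epsilon> z"
    unfolding approx_smooth_space_def by blast
  define i :: 'n where "i = undefined"
  show "smooth_space TYPE('b)" unfolding smooth_space_def
  proof (intro allI impI)
    fix y :: 'b assume y: "norm y = 1"
    define T where "T = R i y"
    have T0: "T \<noteq> 0" using y by (metis T_def norm_T norm_zero zero_neq_one)
    have "eps_smooth \<epsilon> T" unfolding eps_smooth_def
    proof (intro conjI ballI T0)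
      fix \<Phi> \<Psi> assume \<Phi>: "\<Phi> \<in> Jset T" and \<Psi>: "\<Psi> \<in> Jset T"
      have d: "norm (P i \<Phi> - P i \<Psi>) \<le> \<epsilon>"
        using es[OF y] P_J[OF y \<Phi>[unfolded T_def]] P_J[OF y \<Psi>[unfolded T_def]]
        unfolding eps_smooth_def by blast
      show "norm (\<Phi> - \<Psi>) \<le> \<epsilon>"
      proof (rule norm_blinfun_bound[OF e(1)])
        fix S
        have "blinfun_apply (\<Phi> - \<Psi>) S = blinfun_apply (P i \<Phi> - P i \<Psi>) (blinfun_apply S (bas i))"
          using vanish[OF y \<Phi>[unfolded T_def], of S] vanish[OF y \<Psi>[unfolded T_def], of S]
          by (simp add: blinfun.diff_left P_apply)
        also have "norm \<dots> \<le> norm (P i \<Phi> - P i \<Psi>) * norm (blinfun_apply S (bas i))"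
          by (rule norm_blinfun)
        also have "\<dots> \<le> \<epsilon> * norm S"
          by (rule mult_mono[OF d Sb_le]) (auto simp: e)
        finally show "norm (blinfun_apply (\<Phi> - \<Psi>) S) \<le> \<epsilon> * norm S" .
      qed
    qed
    then have "approx_smooth_elem T" using e unfolding approx_smooth_elem_def by blast
    with assms T0 have "smooth_elem T" by blast
    then obtain \<Phi>0 where J: "Jset T = {\<Phi>0}" unfolding smooth_elem_def by blast
    have "Jset y = {P i \<Phi>0}"
    proof
      show "{P i \<Phi>0} \<subseteq> Jset y" using P_J[OF y, of \<Phi>0 i] J by (simp add: T_def)
      show "Jset y \<subseteq> {P i \<Phi>0}"
      proof
        fix \<psi> assume \<psi>: "\<psi> \<in> Jset y"
        have "L i \<psi> = \<Phi>0" using L_J[OF y \<psi>, of i] J by (simp add: T_def)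
        then have "\<psi> = P i \<Phi>0"
          by (intro blinfun_eqI) (metis L_apply P_apply R_bas)
        then show "\<psi> \<in> {P i \<Phi>0}" by simp
      qed
    qed
    then show "smooth_elem y" using y unfolding smooth_elem_def by auto
  qed
qed

end
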